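(* For every $n\ge 1$, the maximum number of flippable faces of a locally valid MV assignment of $M_{2,n}$ is $2n$; it is attained by exactly two locally valid MV assignments, and both are colored blue.
   Context: The $2\times n$ Miura-ori $M_{2,n}$ ($n\ge1$) has faces $\alpha_{i,j}$ ($i\in\{1,2\}$, $j\in\{1,\dots,n\}$), interior vertices $x_1,\dots,x_{n-1}$, and creases $e_0$ and $e_{3k-1},e_{3k},e_{3k+1}$ ($k=1,\dots,n-1$). At $x_k$ the creases are left $e_{3k-3}$, top $e_{3k-1}$, right $e_{3k}$, bottom $e_{3k+1}$. Face $\alpha_{1,j}$ is bordered by those of $e_{3j-4}$ (iff $j\ge2$), $e_{3j-3}$, $e_{3j-1}$ (iff $j\le n-1$); $\alpha_{2,j}$ by those of $e_{3j-2}$ (iff $j\ge2$), $e_{3j-3}$, $e_{3j+1}$ (iff $j\le n-1$). An MV assignment $\mu$ maps creases to $\{1,-1\}$; it is locally valid if for each $k$ exactly one of $\mu(e_{3k-1}),\mu(e_{3k}),\mu(e_{3k+1})$ differs from $\mu(e_{3k-3})$. The face flip $\mu_\alpha$ negates $\mu$ on the creases bordering $\alpha$; $\alpha$ is flippable under $\mu$ if $\mu,\mu_\alpha$ are both locally valid; $f(\mu)$ is the number of flippable faces. For $n\ge2$, the restriction of a locally valid $\mu'$ on $M_{2,n}$ to the creases of $M_{2,n-1}$ (all but $e_{3n-4},e_{3n-3},e_{3n-2}$) is a locally valid $\mu$ on $M_{2,n-1}$, and $\mu'$ is colored blue, orange or magenta according as $f(\mu')-f(\mu)=2,1,0$. Both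 locally valid assignments of $M_{2,1}$ are colored blue. *)

theory Defs
  imports Main
begin

(* Creases of M_{2,n}: e_0 and e_{3k-1}, e_{3k}, e_{3k+1} for k = 1..n-1,
   i.e. the index set {0} \<union> {2..3n-2} (just {0} when n = 1). *)
definition creases :: "nat \<Rightarrow> nat set" where
  "creases n = {0} \<union> (\<Union>k\<in>{1..<n}. {3*k-1, 3*k, 3*k+1})"

definition MV_assignments :: "nat \<Rightarrow> (nat \<Rightarrow> int) set" where
  "MV_assignments n = {\<mu>. (\<forall>e\<in>creases n. \<mu> e \<in> {1, -1}) \<and> (\<forall>e. e \<notin> creases n \<longrightarrow> \<mu> e = 0)}"

(* locally valid: at each interior vertex x_k exactly one of top/right/bottom
   differs from the left crease e_{3k-3} *)
definition locally_valid :: "nat \<Rightarrow> (nat \<Rightarrow> int) \<Rightarrow> bool" where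
  "locally_valid n \<mu> \<longleftrightarrow> \<mu> \<in> MV_assignments n \<and>
     (\<forall>k\<in>{1..<n}. card {e \<in> {3*k-1, 3*k, 3*k+1}. \<mu> e \<noteq> \<mu> (3*k-3)} = 1)"

definition faces :: "nat \<Rightarrow> (nat \<times> nat) set" where
  "faces n = {1,2} \<times> {1..n}"

definition face_creases :: "nat \<Rightarrow> nat \<times> nat \<Rightarrow> nat set" where
  "face_creases n f = (case f of (i, j) \<Rightarrow>
     (if i = 1 then {e. (j \<ge> 2 \<and> e = 3*j-4) \<or> e = 3*j-3 \<or> (j \<le> n-1 \<and> e = 3*j-1)}
      else {e. (j \<ge> 2 \<and> e = 3*j-2) \<or> e = 3*j-3 \<or> (j \<le> n-1 \<and> e = 3*j+1)}))"

definition face_flip :: "nat \<Rightarrow> nat \<times> nat \<Rightarrow> (nat \<Rightarrow> int) \<Rightarrow> (nat \<Rightarrow> int)" where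
  "face_flip n f \<mu> = (\<lambda>e. if e \<in> face_creases n f then - \<mu> e else \<mu> e)"

definition flippable :: "nat \<Rightarrow> (nat \<Rightarrow> int) \<Rightarrow> nat \<times> nat \<Rightarrow> bool" where
  "flippable n \<mu> f \<longleftrightarrow> locally_valid n \<mu> \<and> locally_valid n (face_flip n f \<mu>)"

definition num_flippable :: "nat \<Rightarrow> (nat \<Rightarrow> int) \<Rightarrow> nat" where
  "num_flippable n \<mu> = card {f \<in> faces n. flippable n \<mu> f}"

definition restrict_MV :: "nat \<Rightarrow> (nat \<Rightarrow> int) \<Rightarrow> (nat \<Rightarrow> int)" where
  "restrict_MV n \<mu> = (\<lambda>e. if e \<in> creases (n-1) then \<mu> e else 0)"

definition blue :: "nat \<Rightarrow> (nat \<Rightarrow> int) \<Rightarrow> bool" where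
  "blue n \<mu> \<longleftrightarrow> locally_valid n \<mu> \<and>
     (n = 1 \<or> (n \<ge> 2 \<and> int (num_flippable n \<mu>) - int (num_flippable (n-1) (restrict_MV n \<mu>)) = 2))"

end

theory Submission
  imports Defs
begin

lemma creases_iff: "e \<in> creases n \<longleftrightarrow> e = 0 \<or> (2 \<le> e \<and> e + 2 \<le> 3*n)"
proof
  assume "e \<in> creases n" then show "e = 0 \<or> (2 \<le> e \<and> e + 2 \<le> 3*n)"
    unfolding creases_def by auto
next
  assume h: "e = 0 \<or> (2 \<le> e \<and> e + 2 \<le> 3*n)"
  show "e \<in> creases n"
  proof (cases "e = 0")
    case True then show ?thesis unfolding creases_def by auto
  next
    case False
    define k where "k = (e+1) div 3"
    have "k \<in> {1..<n}" "e = 3*k-1 \<or> e = 3*k \<or> e = 3*k+1" using h False unfolding k_def by auto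
    then show ?thesis unfolding creases_def by blast
  qed
qed

definition vx :: "(nat \<Rightarrow> int) \<Rightarrow> nat \<Rightarrow> bool" where
  "vx \<mu> k \<longleftrightarrow> ((\<mu>(3*k-1) \<noteq> \<mu>(3*k-3) \<and> \<mu>(3*k) = \<mu>(3*k-3) \<and> \<mu>(3*k+1) = \<mu>(3*k-3))
    \<or> (\<mu>(3*k-1) = \<mu>(3*k-3) \<and> \<mu>(3*k) \<noteq> \<mu>(3*k-3) \<and> \<mu>(3*k+1) = \<mu>(3*k-3))
    \<or> (\<mu>(3*k-1) = \<mu>(3*k-3) \<and> \<mu>(3*k) = \<mu>(3*k-3) \<and> \<mu>(3*k+1) \<noteq> \<mu>(3*k-3)))"

lemma card3: "a \<noteq> b \<Longrightarrow> a \<noteq> c \<Longrightarrow> b \<noteq> c \<Longrightarrow>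
  card {e \<in> {a,b,c}. P e} = 1 \<longleftrightarrow>
   ((P a \<and> \<not> P b \<and> \<not> P c) \<or> (\<not> P a \<and> P b \<and> \<not> P c) \<or> (\<not> P a \<and> \<not> P b \<and> P c))"
proof -
  assume d: "a \<noteq> b" "a \<noteq> c" "b \<noteq> c"
  have "{e \<in> {a,b,c}. P e} = (if P a then {a} else {}) \<union> (if P b then {b} else {}) \<union> (if P c then {c} else {})"
    by auto
  then show ?thesis using d by (simp only:; cases "P a"; cases "P b"; cases "P c"; simp add: card_insert_if)
qed

lemma lv_iff: "locally_valid n \<mu> \<longleftrightarrow> \<mu> \<in> MV_assignments n \<and> (\<forall>k\<in>{1..<n}. vx \<mu> k)"
proof -
  have "k \<in> {1..<n} \<Longrightarrow> card {e \<in> {3*k-1, 3*k, 3*k+1}. \<mu> e \<noteq> \<mu> (3*k-3)} = 1 \<longleftrightarrow> vx \<mu> k" for k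
    unfolding vx_def by (subst card3) auto
  then show ?thesis unfolding locally_valid_def by auto
qed


lemma vert_in: "k \<in> {1..<n} \<Longrightarrow> 3*k-3 \<in> creases n \<and> 3*k-1 \<in> creases n \<and> 3*k \<in> creases n \<and> 3*k+1 \<in> creases n"
  by (auto simp: creases_iff)

lemma MV_val: "\<mu> \<in> MV_assignments n \<Longrightarrow> e \<in> creases n \<Longrightarrow> \<mu> e = 1 \<or> \<mu> e = -1"
  unfolding MV_assignments_def by auto

lemma flip_MV: "\<mu> \<in> MV_assignments n \<Longrightarrow> face_flip n f \<mu> \<in> MV_assignments n"
  unfolding MV_assignments_def face_flip_def by auto

lemma fc1_iff: "e \<in> face_creases n (1,j) \<longleftrightarrow> (2\<le>j \<and> e=3*j-4) \<or> e = 3*j-3 \<or> (j\<le>n-1 \<and> e=3*j-1)"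
  by (simp add: face_creases_def)
lemma fc2_iff: "e \<in> face_creases n (2,j) \<longleftrightarrow> (2\<le>j \<and> e=3*j-2) \<or> e = 3*j-3 \<or> (j\<le>n-1 \<and> e=3*j+1)"
  by (simp add: face_creases_def)

lemma fc1: assumes "1 \<le> k" "1 \<le> j"
  shows "(3*k-3 \<in> face_creases n (1,j)) = (k = j)"
    "(3*k-1 \<in> face_creases n (1,j)) = (k+1 = j \<or> (k = j \<and> j \<le> n-1))"
    "(3*k \<in> face_creases n (1,j)) = (k+1 = j)"
    "(3*k+1 \<in> face_creases n (1,j)) = False"
  using assms unfolding fc1_iff by (auto; arith)+

lemma fc2: assumes "1 \<le> k" "1 \<le> j"
  shows "(3*k-3 \<in> face_creases n (2,j)) = (k = j)"
    "(3*k+1 \<in> face_creases n (2,j)) = (k+1 = j \<or> (k = j \<and> j \<le> n-1))"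
    "(3*k \<in> face_creases n (2,j)) = (k+1 = j)"
    "(3*k-1 \<in> face_creases n (2,j)) = False"
  using assms unfolding fc2_iff by (auto; arith)+


definition good :: "nat \<Rightarrow> (nat \<Rightarrow> int) \<Rightarrow> bool" where
  "good n \<mu> \<longleftrightarrow> (\<forall>k\<in>{1..<n}. \<mu>(3*k-1) = \<mu>(3*k-3) \<and> \<mu>(3*k+1) = \<mu>(3*k-3) \<and> \<mu>(3*k) = - \<mu>(3*k-3))"

lemma flip_good:
  assumes lv: "locally_valid n \<mu>" and all: "\<forall>f\<in>faces n. flippable n \<mu> f"
  shows "good n \<mu>"
  unfolding good_def
proof
  fix k assume k: "k \<in> {1..<n}"
  have MV: "\<mu> \<in> MV_assignments n" and v: "vx \<mu> k" using lv k by (auto simp: lv_iff)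
  have "(1,k) \<in> faces n" "(2,k) \<in> faces n" using k by (auto simp: faces_def)
  then have "locally_valid n (face_flip n (1,k) \<mu>)" "locally_valid n (face_flip n (2,k) \<mu>)"
    using all by (auto simp: flippable_def)
  then have v1: "vx (face_flip n (1,k) \<mu>) k" and v2: "vx (face_flip n (2,k) \<mu>) k"
    using k by (auto simp: lv_iff)
  have k1: "1 \<le> k" "k \<le> n - 1" using k by auto
  have vals: "\<mu>(3*k-3) = 1 \<or> \<mu>(3*k-3) = -1" "\<mu>(3*k-1) = 1 \<or> \<mu>(3*k-1) = -1"
     "\<mu>(3*k) = 1 \<or> \<mu>(3*k) = -1" "\<mu>(3*k+1) = 1 \<or> \<mu>(3*k+1) = -1"
    using MV_val[OF MV] vert_in[OF k] by auto
  from v1 k1 have a: "\<mu>(3*k-1) = \<mu>(3*k-3)"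
    using v unfolding vx_def face_flip_def fc1[OF k1(1) k1(1)] using vals by auto
  from v2 k1 have b: "\<mu>(3*k+1) = \<mu>(3*k-3)"
    using v unfolding vx_def face_flip_def fc2[OF k1(1) k1(1)] using vals by auto
  show "\<mu>(3*k-1) = \<mu>(3*k-3) \<and> \<mu>(3*k+1) = \<mu>(3*k-3) \<and> \<mu>(3*k) = - \<mu>(3*k-3)"
    using a b v vals unfolding vx_def by auto
qed


lemma good_flip:
  assumes lv: "locally_valid n \<mu>" and g: "good n \<mu>" and f: "f \<in> faces n"
  shows "flippable n \<mu> f"
proof -
  obtain i j where f': "f = (i,j)" "i = 1 \<or> i = 2" "1 \<le> j" "j \<le> n" using f by (auto simp: faces_def)
  have MV: "\<mu> \<in> MV_assignments n" using lv by (auto simp: lv_iff)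
  have "vx (face_flip n (i,j) \<mu>) k" if k: "k \<in> {1..<n}" for k
  proof -
    have k1: "1 \<le> k" and k2: "k \<le> n - 1" using k by auto
    have vals: "\<mu>(3*k-3) = 1 \<or> \<mu>(3*k-3) = -1"
      using MV_val[OF MV] vert_in[OF k] by auto
    have gk: "\<mu>(3*k-1) = \<mu>(3*k-3)" "\<mu>(3*k+1) = \<mu>(3*k-3)" "\<mu>(3*k) = - \<mu>(3*k-3)"
      using g k unfolding good_def by auto
    show ?thesis
    proof (cases "i = 1")
      case True
      then show ?thesis unfolding \<open>i = 1\<close> vx_def face_flip_def fc1[OF k1 f'(3)] using gk vals k2 by auto
    next
      case False
      then have "i = 2" using f' by auto
      then show ?thesis unfolding \<open>i = 2\<close> vx_def face_flip_def fc2[OF k1 f'(3)] using gk vals k2 by auto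
    qed
  qed
  then show ?thesis using lv MV flip_MV f' unfolding flippable_def by (auto simp: lv_iff)
qed


definition ms :: "nat \<Rightarrow> int \<Rightarrow> (nat \<Rightarrow> int)" where
  "ms n s = (\<lambda>e. if e \<in> creases n then (if e = 0 \<or> even e then s else -s) else 0)"

lemma ms_vals:
  assumes k: "k \<in> {1..<n}"
  shows "ms n s (3*k-3) = (if even k then -s else s)"
    "ms n s (3*k-1) = (if even k then -s else s)"
    "ms n s (3*k+1) = (if even k then -s else s)"
    "ms n s (3*k) = (if even k then s else -s)"
proof -
  have k1: "1 \<le> k" using k by auto
  have p1: "(3*k-3 = 0 \<or> even (3*k-3)) \<longleftrightarrow> odd k" using k1 by presburger
  have p2: "(3*k-1 = 0 \<or> even (3*k-1)) \<longleftrightarrow> odd k" using k1 by presburger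
  have p3: "(3*k+1 = 0 \<or> even (3*k+1)) \<longleftrightarrow> odd k" by presburger
  have p4: "(3*k = 0 \<or> even (3*k)) \<longleftrightarrow> even k" using k1 by presburger
  show "ms n s (3*k-3) = (if even k then -s else s)"
    using vert_in[OF k] p1 unfolding ms_def by auto
  show "ms n s (3*k-1) = (if even k then -s else s)"
    using vert_in[OF k] p2 unfolding ms_def by auto
  show "ms n s (3*k+1) = (if even k then -s else s)"
    using vert_in[OF k] p3 unfolding ms_def by auto
  show "ms n s (3*k) = (if even k then s else -s)"
    using vert_in[OF k] p4 unfolding ms_def by auto
qed

lemma ms_valid:
  assumes s: "s = 1 \<or> s = -1"
  shows "locally_valid n (ms n s) \<and> good n (ms n s)"
proof -
  have MV: "ms n s \<in> MV_assignments n" using s unfolding MV_assignments_def ms_def by auto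
  have "vx (ms n s) k \<and> (ms n s (3*k-1) = ms n s (3*k-3) \<and> ms n s (3*k+1) = ms n s (3*k-3) \<and> ms n s (3*k) = - ms n s (3*k-3))"
    if k: "k \<in> {1..<n}" for k
    using s unfolding vx_def ms_vals[OF k] by auto
  then show ?thesis using MV unfolding lv_iff good_def by auto
qed

lemma good_eq:
  assumes lv: "locally_valid n \<mu>" and g: "good n \<mu>"
  shows "\<mu> = ms n (\<mu> 0)"
proof
  fix e
  have MV: "\<mu> \<in> MV_assignments n" using lv by (auto simp: lv_iff)
  have m3: "k < n \<Longrightarrow> \<mu> (3*k) = (if even k then \<mu> 0 else - \<mu> 0)" for k
  proof (induction k)
    case 0 then show ?case by simp
  next
    case (Suc k)
    then have "Suc k \<in> {1..<n}" by auto
    then have "\<mu> (3 * Suc k) = - \<mu> (3 * Suc k - 3)" using g unfolding good_def by blast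
    moreover have "3 * Suc k - 3 = 3 * k" by simp
    ultimately show ?case using Suc by auto
  qed
  show "\<mu> e = ms n (\<mu> 0) e"
  proof (cases "e \<in> creases n")
    case False
    then show ?thesis using MV unfolding MV_assignments_def ms_def by auto
  next
    case True
    show ?thesis
    proof (cases "e = 0")
      case True then show ?thesis using \<open>e \<in> creases n\<close> unfolding ms_def by auto
    next
      case False
      define k where "k = (e+1) div 3"
      have k: "k \<in> {1..<n}" using False \<open>e \<in> creases n\<close> unfolding k_def creases_iff by auto
      have gk: "\<mu>(3*k-1) = \<mu>(3*k-3)" "\<mu>(3*k+1) = \<mu>(3*k-3)" "\<mu>(3*k) = - \<mu>(3*k-3)"
        using g k unfolding good_def by auto
      have mk: "\<mu> (3*k) = (if even k then \<mu> 0 else - \<mu> 0)" using m3 k by auto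
      have "e = 3*k-1 \<or> e = 3*k \<or> e = 3*k+1" unfolding k_def by auto
      then show ?thesis using gk mk ms_vals[OF k, of "\<mu> 0"] by auto
    qed
  qed
qed


lemma card_faces: "card (faces n) = 2 * n" and fin_faces: "finite (faces n)"
  unfolding faces_def by (auto simp: card_cartesian_product)

lemma nf_le: "num_flippable n \<mu> \<le> 2 * n"
  unfolding num_flippable_def using card_mono[OF fin_faces, of "{f \<in> faces n. flippable n \<mu> f}"]
  by (auto simp: card_faces)

lemma nf_full:
  assumes lv: "locally_valid n \<mu>"
  shows "num_flippable n \<mu> = 2 * n \<longleftrightarrow> good n \<mu>"
proof
  assume h: "num_flippable n \<mu> = 2 * n"
  have "{f \<in> faces n. flippable n \<mu> f} = faces n"
    using card_subset_eq[OF fin_faces, of "{f \<in> faces n. flippable n \<mu> f}"] h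
    unfolding num_flippable_def card_faces by auto
  then have "\<forall>f\<in>faces n. flippable n \<mu> f" by blast
  then show "good n \<mu>" using flip_good lv by blast
next
  assume "good n \<mu>"
  then have "{f \<in> faces n. flippable n \<mu> f} = faces n" using good_flip lv by blast
  then show "num_flippable n \<mu> = 2 * n" unfolding num_flippable_def by (simp add: card_faces)
qed

lemma zero_in: "0 \<in> creases n" by (simp add: creases_iff)

lemma ms_full: "s = 1 \<or> s = -1 \<Longrightarrow> locally_valid n (ms n s) \<and> num_flippable n (ms n s) = 2 * n"
  using ms_valid nf_full by blast

lemma full_set: "{\<mu>. locally_valid n \<mu> \<and> num_flippable n \<mu> = 2 * n} = {ms n 1, ms n (-1)}"
proof
  show "{\<mu>. locally_valid n \<mu> \<and> num_flippable n \<mu> = 2 * n} \<subseteq> {ms n 1, ms n (-1)}"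
  proof
    fix \<mu> assume "\<mu> \<in> {\<mu>. locally_valid n \<mu> \<and> num_flippable n \<mu> = 2 * n}"
    then have lv: "locally_valid n \<mu>" and g: "good n \<mu>" using nf_full by auto
    have "\<mu> 0 = 1 \<or> \<mu> 0 = -1" using lv zero_in MV_val by (auto simp: lv_iff)
    then show "\<mu> \<in> {ms n 1, ms n (-1)}" using good_eq[OF lv g] by auto
  qed
next
  show "{ms n 1, ms n (-1)} \<subseteq> {\<mu>. locally_valid n \<mu> \<and> num_flippable n \<mu> = 2 * n}"
    using ms_full by auto
qed

lemma ms_restrict: "restrict_MV n (ms n s) = ms (n-1) s"
  unfolding restrict_MV_def ms_def creases_iff by (rule ext) auto

theorem lemma4p6:
  fixes n :: nat
  assumes "n \<ge> 1"
  shows "Max (num_flippable n ` {\<mu>. locally_valid n \<mu>}) = 2 * n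
         \<and> card {\<mu>. locally_valid n \<mu> \<and> num_flippable n \<mu> = 2 * n} = 2
         \<and> (\<forall>\<mu>. locally_valid n \<mu> \<and> num_flippable n \<mu> = 2 * n \<longrightarrow> blue n \<mu>)"
proof (intro conjI allI impI)
  have fin: "finite (num_flippable n ` {\<mu>. locally_valid n \<mu>})"
    by (rule finite_subset[of _ "{..2*n}"]) (auto simp: nf_le)
  show "Max (num_flippable n ` {\<mu>. locally_valid n \<mu>}) = 2 * n"
  proof (rule Max_eqI[OF fin])
    show "2 * n \<in> num_flippable n ` {\<mu>. locally_valid n \<mu>}"
      using ms_full[of 1 n] by (intro image_eqI[of _ _ "ms n 1"]) auto
  qed (use nf_le in auto)
  have "ms n 1 \<noteq> ms n (-1)"
  proof
    assume "ms n 1 = ms n (-1)"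
    then have "ms n 1 0 = ms n (-1) 0" by simp
    then show False using zero_in[of n] unfolding ms_def by simp
  qed
  then show "card {\<mu>. locally_valid n \<mu> \<and> num_flippable n \<mu> = 2 * n} = 2"
    unfolding full_set by simp
  fix \<mu> assume h: "locally_valid n \<mu> \<and> num_flippable n \<mu> = 2 * n"
  then obtain s where s: "s = 1 \<or> s = -1" "\<mu> = ms n s" using full_set by blast
  show "blue n \<mu>"
  proof (cases "n = 1")
    case True then show ?thesis using h unfolding blue_def by simp
  next
    case False
    then have "n \<ge> 2" using assms by auto
    moreover have "num_flippable (n-1) (restrict_MV n \<mu>) = 2 * (n-1)"
      using s ms_full[of s "n-1"] unfolding s(2) ms_restrict by simp
    ultimately show ?thesis using h unfolding blue_def by simp
  qed
qed

end
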